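(* Let $\mathbb{K}$ be a field of characteristic zero containing all complex roots of unity, $q$ transcendental over $\mathbb{K}$, $\mathbb{W}=\mathbb{K}(q)[M]\langle L\rangle$ the first $q$-Weyl algebra and $\mathbb{O}=\mathbb{K}(q,M)\langle L\rangle$. Fix a nonzero $P\in\mathbb{W}$ and a complex $m$-th root of unity $\omega$, and let $\tau_\omega(P)$ be defined as in the context. Then $\tau_\omega(P)\in\mathbb{K}(q)[M^m]\langle L\rangle$ and $S(P)\subseteq S(\tau_\omega(P))$.
   Context: In $\mathbb{W}$ and $\mathbb{O}$ the relation $LM=qML$ holds ($L$ acts on sequences by $Lf_n=f_{n+1}$, $M$ by $Mf_n=q^nf_n$). The operator $\tau_\omega(P)$ is the annihilator of the twisted sequence produced from $P$ as follows: take a nonzero element $A$ of minimal order in $L$ of the left ideal $\mathbb{O}P\cap\mathbb{K}(q,M^m)\langle L\rangle$ (i.e. an element of $\mathbb{O}P$ in which $M$ occurs only with exponents divisible by $m$), clear denominators so that $A=\sum_j c_j(q,M)L^j$ with polynomial coefficients in $M^m$ that are content-free, $\gcd(c_0,\dots,c_d)=1$, and then substitute $q\to\omega q$; if $Pf_n(q)=0$ then $\tau_\omega(P)f_n(\omega q)=0$. Newton polygon: for $P\in\mathbb{W}$ written as a sum of monomials $M^bL^a$ with coefficients in $\mathbb{K}(q)$, $N(P)$ is the convex hull in $\mathbb{R}^2$ of the exponent pairs $(a,b)$ occurring. $LN(P)$ is the lower convex hull of $N(P)$, consisting of finitely many non-vertical line segments and two vertical rays; $S(P)$ denotes the set of slopes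 of the non-vertical segments of $LN(P)$. *)

theory Defs
  imports "HOL-Analysis.Analysis" "HOL-Computational_Algebra.Polynomial"
          "HOL-Computational_Algebra.Fraction_Field"
begin

text \<open>K(q): rational functions in the transcendental q over K.\<close>
type_synonym 'k qfun = "'k poly fract"
text \<open>W = K(q)[M]<L>: an element is a polynomial in L (outer) whose coefficients
  are polynomials in M over K(q); written with coefficients on the left of L^j.\<close>
type_synonym 'k qweyl = "'k qfun poly poly"
text \<open>O = K(q,M)<L>, with K(q,M) = Frac(K(q)[M]).\<close>
type_synonym 'k qore = "'k qfun poly fract poly"

definition qvar :: "'k::field qfun" where
  "qvar = Fract [:0, 1:] 1"

text \<open>Extension of a (injective ring) map to fractions, on representatives.\<close>
definition fract_map :: "('a::idom \<Rightarrow> 'b::idom) \<Rightarrow> 'a fract \<Rightarrow> 'b fract" where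
  "fract_map f x = (SOME y. \<forall>a b. b \<noteq> 0 \<longrightarrow> x = Fract a b \<longrightarrow> y = Fract (f a) (f b))"

text \<open>Commutation L c = sigma(c) L with sigma(c)(M) = c(qM), i.e. L M = q M L.\<close>
definition sigma_W :: "'k::field qfun poly \<Rightarrow> 'k qfun poly" where
  "sigma_W c = pcompose c [:0, qvar:]"

definition sigma_O :: "'k::field qfun poly fract \<Rightarrow> 'k qfun poly fract" where
  "sigma_O = fract_map sigma_W"

definition skew_mult :: "('a::comm_ring_1 \<Rightarrow> 'a) \<Rightarrow> 'a poly \<Rightarrow> 'a poly \<Rightarrow> 'a poly" where
  "skew_mult \<sigma> A B =
     (\<Sum>i\<le>degree A. \<Sum>j\<le>degree B. monom (coeff A i * (\<sigma> ^^ i) (coeff B j)) (i + j))"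

definition W_to_O :: "'k::field qweyl \<Rightarrow> 'k qore" where
  "W_to_O A = map_poly (\<lambda>c. Fract c 1) A"

definition left_ideal_O :: "'k::field qweyl \<Rightarrow> 'k qore set" where
  "left_ideal_O P = {skew_mult sigma_O Q (W_to_O P) | Q. True}"

definition in_Mm_poly :: "nat \<Rightarrow> 'a::zero poly \<Rightarrow> bool" where
  "in_Mm_poly m p \<longleftrightarrow> (\<forall>i. coeff p i \<noteq> 0 \<longrightarrow> m dvd i)"

definition in_KqMm :: "nat \<Rightarrow> 'k::field qfun poly fract \<Rightarrow> bool" where
  "in_KqMm m x \<longleftrightarrow> (\<exists>a b. b \<noteq> 0 \<and> in_Mm_poly m a \<and> in_Mm_poly m b \<and> x = Fract a b)"

definition in_O_Mm :: "nat \<Rightarrow> 'k::field qore \<Rightarrow> bool" where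
  "in_O_Mm m A \<longleftrightarrow> (\<forall>j. in_KqMm m (coeff A j))"

text \<open>A is an admissible choice for the operator before twisting: a nonzero element of
  minimal L-order in O P \<inter> K(q,M^m)<L>, with denominators cleared (coefficients in
  K(q)[M^m]) and content-free (the coefficients have no common non-unit divisor).\<close>
definition tau_pre :: "nat \<Rightarrow> 'k::field qweyl \<Rightarrow> 'k qweyl \<Rightarrow> bool" where
  "tau_pre m P A \<longleftrightarrow>
     A \<noteq> 0 \<and> (\<forall>j. in_Mm_poly m (coeff A j)) \<and> W_to_O A \<in> left_ideal_O P \<and>
     (\<forall>B. B \<in> left_ideal_O P \<and> in_O_Mm m B \<and> B \<noteq> 0 \<longrightarrow> degree A \<le> degree B) \<and>
     (\<forall>d. (\<forall>j. d dvd coeff A j) \<longrightarrow> is_unit d)"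

definition subst_q :: "'k::field \<Rightarrow> 'k qfun \<Rightarrow> 'k qfun" where
  "subst_q \<omega> = fract_map (\<lambda>a. pcompose a [:0, \<omega>:])"

definition twist :: "'k::field \<Rightarrow> 'k qweyl \<Rightarrow> 'k qweyl" where
  "twist \<omega> A = map_poly (map_poly (subst_q \<omega>)) A"

definition newton_polygon :: "'k::field qweyl \<Rightarrow> (real \<times> real) set" where
  "newton_polygon P = convex hull {(real a, real b) | a b. coeff (coeff P a) b \<noteq> 0}"

text \<open>Lower convex hull: boundary of N(P) + upward vertical ray (segments plus two vertical rays).\<close>
definition lower_hull :: "(real \<times> real) set \<Rightarrow> (real \<times> real) set" where
  "lower_hull X = frontier {(x, y + t) | x y t. (x, y) \<in> X \<and> t \<ge> 0}"

definition newton_slopes :: "'k::field qweyl \<Rightarrow> real set" where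
  "newton_slopes P = {(snd v - snd u) / (fst v - fst u) | u v.
      fst u < fst v \<and> closed_segment u v \<subseteq> lower_hull (newton_polygon P)}"

end

theory Submission
  imports Defs
begin


lemma ord_zero_below:
  fixes p :: "'a::idom poly"
  assumes "p \<noteq> 0" "k < order 0 p" shows "coeff p k = 0"
  using monom_1_dvd_iff[OF assms(1), of "order 0 p"] monom_1_dvd_iff'[of "order 0 p" p] assms by auto

lemma ord_coeff_nz:
  fixes p :: "'a::idom poly"
  assumes "p \<noteq> 0" shows "coeff p (order 0 p) \<noteq> 0"
proof
  assume h: "coeff p (order 0 p) = 0"
  have "\<forall>k<Suc (order 0 p). coeff p k = 0"
    using ord_zero_below[OF assms] h by (auto simp: less_Suc_eq)
  hence "Suc (order 0 p) \<le> order 0 p"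
    using monom_1_dvd_iff[OF assms] monom_1_dvd_iff' by blast
  thus False by simp
qed

lemma ord_char:
  fixes p :: "'a::idom poly"
  assumes "coeff p n \<noteq> 0" "\<forall>i<n. coeff p i = 0" shows "order 0 p = n"
proof -
  have p: "p \<noteq> 0" using assms by auto
  show ?thesis
  proof (rule ccontr)
    assume "order 0 p \<noteq> n"
    hence "order 0 p < n \<or> n < order 0 p" by auto
    thus False using assms ord_zero_below[OF p] ord_coeff_nz[OF p] by auto
  qed
qed

lemma ord_le:
  fixes p :: "'a::idom poly"
  assumes "coeff p n \<noteq> 0" shows "order 0 p \<le> n"
  using ord_zero_below[of p n] assms by (cases "p = 0") (auto simp: not_less[symmetric])

lemma ord_add:
  fixes p q :: "'a::idom poly"
  assumes "p + q \<noteq> 0" "p \<noteq> 0" "q \<noteq> 0"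
  shows "min (order 0 p) (order 0 q) \<le> order 0 (p + q)"
proof -
  have "\<forall>k<min (order 0 p) (order 0 q). coeff (p + q) k = 0"
    using ord_zero_below[OF assms(2)] ord_zero_below[OF assms(3)] by simp
  thus ?thesis using monom_1_dvd_iff[OF assms(1)] monom_1_dvd_iff' by blast
qed

definition val :: "'a::idom poly fract \<Rightarrow> int" where
  "val x = (SOME n. \<exists>a b. b \<noteq> 0 \<and> a \<noteq> 0 \<and> x = Fract a b \<and> n = int (order 0 a) - int (order 0 b))"

lemma Fract_eq0: "b \<noteq> 0 \<Longrightarrow> Fract a b = 0 \<longleftrightarrow> a = 0"
  by (simp add: Zero_fract_def eq_fract)

lemma val_Fract:
  fixes a b :: "'a::idom poly"
  assumes "a \<noteq> 0" "b \<noteq> 0"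
  shows "val (Fract a b) = int (order 0 a) - int (order 0 b)"
proof -
  have uniq: "n = int (order 0 a) - int (order 0 b)"
    if "d \<noteq> 0" "c \<noteq> 0" "Fract a b = Fract c d" "n = int (order 0 c) - int (order 0 d)" for n c d
  proof -
    have "a * d = c * b" using that assms eq_fract by auto
    hence "order 0 (a * d) = order 0 (c * b)" by simp
    hence "order 0 a + order 0 d = order 0 c + order 0 b"
      using order_mult assms that by (metis mult_eq_0_iff)
    thus ?thesis using that by linarith
  qed
  show ?thesis unfolding val_def
    apply (rule someI2[where a = "int (order 0 a) - int (order 0 b)"])
    using assms apply blast
    using uniq by blast
qed

lemma val_mult:
  fixes x y :: "'a::idom poly fract"
  assumes "x \<noteq> 0" "y \<noteq> 0" shows "val (x * y) = val x + val y"
proof -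
  obtain a b where x: "x = Fract a b" "b \<noteq> 0" by (cases x)
  obtain c d where y: "y = Fract c d" "d \<noteq> 0" by (cases y)
  have a: "a \<noteq> 0" using x assms Fract_eq0 by auto
  have c: "c \<noteq> 0" using y assms Fract_eq0 by auto
  show ?thesis using x y a c
    by (simp add: val_Fract order_mult)
qed

lemma val_add:
  fixes x y :: "'a::idom poly fract"
  assumes "x \<noteq> 0" "y \<noteq> 0" "x + y \<noteq> 0" shows "min (val x) (val y) \<le> val (x + y)"
proof -
  obtain a b where x: "x = Fract a b" "b \<noteq> 0" by (cases x)
  obtain c d where y: "y = Fract c d" "d \<noteq> 0" by (cases y)
  have a: "a \<noteq> 0" using x assms Fract_eq0 by auto
  have c: "c \<noteq> 0" using y assms Fract_eq0 by auto
  have e: "x + y = Fract (a*d+c*b) (b*d)" using x y by simp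
  have s: "a * d + c * b \<noteq> 0" using assms(3) e Fract_eq0[of "b*d"] x y by auto
  have "min (order 0 (a*d)) (order 0 (c*b)) \<le> order 0 (a * d + c * b)"
    using ord_add[OF s] a c x y by auto
  thus ?thesis using x y a c s
    by (simp add: val_Fract order_mult)
qed

lemma val_uminus:
  fixes x :: "'a::idom poly fract"
  shows "val (- x) = val x"
proof (cases "x = 0")
  case False
  obtain a b where x: "x = Fract a b" "b \<noteq> 0" by (cases x)
  have a: "a \<noteq> 0" using x False Fract_eq0 by auto
  have "order 0 (-a) = order 0 a"
      by (rule ord_char) (auto simp: ord_coeff_nz[OF a] ord_zero_below[OF a])
  thus ?thesis using x a by (simp add: val_Fract)
qed simp

lemma val_sum_ge:
  fixes f :: "'b \<Rightarrow> 'a::idom poly fract"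
  assumes "finite I"
  shows "(\<forall>i\<in>I. f i \<noteq> 0 \<longrightarrow> r \<le> real_of_int (val (f i))) \<Longrightarrow> sum f I \<noteq> 0 \<Longrightarrow> r \<le> real_of_int (val (sum f I))"
  using assms
proof (induction I rule: finite_induct)
  case empty thus ?case by simp
next
  case (insert i I)
  have e: "sum f (insert i I) = f i + sum f I" using insert by simp
  show ?case
  proof (cases "f i = 0")
    case True thus ?thesis using insert e by simp
  next
    case fi: False
    show ?thesis
    proof (cases "sum f I = 0")
      case True thus ?thesis using insert e fi by simp
    next
      case False
      have "r \<le> real_of_int (val (sum f I))" using insert False by simp
      moreover have "r \<le> real_of_int (val (f i))" using insert fi by simp
      moreover have "min (val (f i)) (val (sum f I)) \<le> val (sum f (insert i I))"
        using val_add[OF fi False] insert(5) e by simp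
      ultimately show ?thesis by linarith
    qed
  qed
qed

lemma val_sum_unique:
  fixes f :: "'b \<Rightarrow> 'a::idom poly fract"
  assumes "finite I" "i0 \<in> I" "f i0 \<noteq> 0"
    and "\<forall>i\<in>I-{i0}. f i \<noteq> 0 \<longrightarrow> val (f i0) < val (f i)"
  shows "sum f I \<noteq> 0 \<and> val (sum f I) = val (f i0)"
proof -
  define S where "S = sum f (I - {i0})"
  have e: "sum f I = f i0 + S" unfolding S_def using assms by (simp add: sum.remove)
  show ?thesis
  proof (cases "S = 0")
    case True thus ?thesis using e assms by simp
  next
    case False
    have "real_of_int (val (f i0) + 1) \<le> real_of_int (val S)"
      unfolding S_def
      apply (rule val_sum_ge)
      using assms False S_def by auto
    hence vS: "val (f i0) < val S" by linarith
    have nz: "f i0 + S \<noteq> 0"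
    proof
      assume "f i0 + S = 0"
      hence "S = - f i0" by (simp add: eq_neg_iff_add_eq_0 add.commute)
      hence "val S = val (f i0)" by (simp add: val_uminus)
      thus False using vS by simp
    qed
    have g1: "min (val (f i0)) (val S) \<le> val (f i0 + S)" using val_add[OF assms(3) False nz] .
    have "f i0 = (f i0 + S) + (- S)" by simp
    hence "min (val (f i0 + S)) (val (- S)) \<le> val (f i0)"
      using val_add[OF nz, of "- S"] False assms(3) by simp
    hence "val (f i0 + S) \<le> val (f i0)" using vS by (simp add: val_uminus)
    thus ?thesis using g1 vS nz e by simp
  qed
qed

lemma fract_map_Fract:
  assumes m: "\<And>x y. f (x*y) = f x * f y" and nz: "\<And>x. x \<noteq> 0 \<Longrightarrow> f x \<noteq> 0" and b: "b \<noteq> 0"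
  shows "fract_map f (Fract a b) = Fract (f a) (f b)"
proof -
  let ?P = "\<lambda>y. \<forall>a' b'. b' \<noteq> 0 \<longrightarrow> Fract a b = Fract a' b' \<longrightarrow> y = Fract (f a') (f b')"
  have "?P (Fract (f a) (f b))"
  proof (intro allI impI)
    fix a' b' assume b': "b' \<noteq> 0" and e: "Fract a b = Fract a' b'"
    hence "a * b' = a' * b" using b eq_fract by auto
    hence "f a * f b' = f a' * f b" by (metis m)
    moreover have "f b \<noteq> 0" "f b' \<noteq> 0" using nz b b' by auto
    ultimately show "Fract (f a) (f b) = Fract (f a') (f b')" using eq_fract(1) by auto
  qed
  hence "?P (fract_map f (Fract a b))" unfolding fract_map_def by (rule someI)
  thus ?thesis using b by auto
qed

lemma pcomp_lin_nz:
  fixes p :: "'a::field poly"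
  assumes "c \<noteq> 0" "p \<noteq> 0" shows "pcompose p [:0, c:] \<noteq> 0"
  using pcompose_eq_0_iff[of "[:0,c:]" p] assms by simp

lemma pcomp_lin_order:
  fixes p :: "'a::field poly"
  assumes "c \<noteq> 0" "p \<noteq> 0" shows "order 0 (pcompose p [:0, c:]) = order 0 p"
  by (rule ord_char) (auto simp: coeff_pcompose_linear assms ord_coeff_nz ord_zero_below)

lemma qvar_nz: "qvar \<noteq> (0::'k::field qfun)"
  unfolding qvar_def using Fract_eq0[of "1::'k poly" "[:0,1:]"] by simp

lemma sigma_O_Fract:
  "b \<noteq> 0 \<Longrightarrow> sigma_O (Fract a b :: 'k::field qfun poly fract) = Fract (sigma_W a) (sigma_W b)"
  unfolding sigma_O_def
  by (rule fract_map_Fract) (auto simp: sigma_W_def pcompose_mult pcomp_lin_nz qvar_nz)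

lemma sigma_O_val:
  fixes x :: "'k::field qfun poly fract"
  shows "x \<noteq> 0 \<Longrightarrow> sigma_O x \<noteq> 0 \<and> val (sigma_O x) = val x"
proof -
  assume x0: "x \<noteq> 0"
  obtain a b where x: "x = Fract a b" "b \<noteq> 0" by (cases x)
  have a: "a \<noteq> 0" using x x0 Fract_eq0 by auto
  have nz: "sigma_W a \<noteq> 0" "sigma_W b \<noteq> 0" using a x
    by (auto simp: sigma_W_def pcomp_lin_nz qvar_nz)
  have "Fract (sigma_W a) (sigma_W b) \<noteq> 0" using Fract_eq0[OF nz(2)] nz(1) by simp
  thus ?thesis using x a nz sigma_O_Fract[OF x(2), of a]
    by (simp add: val_Fract sigma_W_def pcomp_lin_order qvar_nz)
qed

lemma sigma_O_0: "sigma_O (0 :: 'k::field qfun poly fract) = 0"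
proof -
  have "sigma_O (Fract 0 1 :: 'k qfun poly fract) = Fract (sigma_W 0) (sigma_W 1)"
    by (rule sigma_O_Fract) simp
  also have "\<dots> = Fract 0 1" by (simp add: sigma_W_def eq_fract(3))
  finally show ?thesis by (simp add: Zero_fract_def)
qed

lemma sigma_O_pow_val:
  fixes x :: "'k::field qfun poly fract"
  shows "x \<noteq> 0 \<Longrightarrow> (sigma_O ^^ n) x \<noteq> 0 \<and> val ((sigma_O ^^ n) x) = val x"
  by (induction n) (auto dest: sigma_O_val)

lemma sigma_O_pow_0: "(sigma_O ^^ n) (0 :: 'k::field qfun poly fract) = 0"
  by (induction n) (auto simp: sigma_O_0)

lemma coeff_skew:
  "coeff (skew_mult \<sigma> A B) k =
     (\<Sum>i\<le>degree A. \<Sum>j\<le>degree B. if i + j = k then coeff A i * (\<sigma> ^^ i) (coeff B j) else 0)"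
  by (simp add: skew_mult_def coeff_sum coeff_monom)



definition psi :: "real \<Rightarrow> 'a::idom poly fract poly \<Rightarrow> nat \<Rightarrow> real" where
  "psi s X i = real_of_int (val (coeff X i)) - s * real i"

lemma term_facts:
  fixes X Y :: "'k::field qore"
  assumes "coeff X i * (sigma_O ^^ i) (coeff Y j) \<noteq> 0"
  shows "coeff X i \<noteq> 0" "coeff Y j \<noteq> 0"
    "val (coeff X i * (sigma_O ^^ i) (coeff Y j)) = val (coeff X i) + val (coeff Y j)"
proof -
  show x: "coeff X i \<noteq> 0" using assms by auto
  show y: "coeff Y j \<noteq> 0" using assms sigma_O_pow_0 by fastforce
  show "val (coeff X i * (sigma_O ^^ i) (coeff Y j)) = val (coeff X i) + val (coeff Y j)"
    using val_mult[OF x, of "(sigma_O ^^ i) (coeff Y j)"] sigma_O_pow_val[OF y, of i] by simp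
qed

lemma coeff_skew_prod:
  "coeff (skew_mult \<sigma> A B) k =
     (\<Sum>(i,j)\<in>{..degree A} \<times> {..degree B}. if i + j = k then coeff A i * (\<sigma> ^^ i) (coeff B j) else 0)"
  by (simp add: coeff_skew sum.cartesian_product)

lemma prod_lower:
  fixes X Y :: "'k::field qore"
  assumes hX: "\<forall>i. coeff X i \<noteq> 0 \<longrightarrow> mX \<le> psi s X i"
    and hY: "\<forall>j. coeff Y j \<noteq> 0 \<longrightarrow> mY \<le> psi s Y j"
    and nz: "coeff (skew_mult sigma_O X Y) k \<noteq> 0"
  shows "mX + mY \<le> psi s (skew_mult sigma_O X Y) k"
proof -
  let ?t = "\<lambda>(i,j). if i + j = k then coeff X i * (sigma_O ^^ i) (coeff Y j) else 0"
  have c: "coeff (skew_mult sigma_O X Y) k = sum ?t ({..degree X} \<times> {..degree Y})"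
    by (rule coeff_skew_prod)
  have "mX + mY + s * real k \<le> real_of_int (val (sum ?t ({..degree X} \<times> {..degree Y})))"
  proof (rule val_sum_ge)
    show "finite ({..degree X} \<times> {..degree Y})" by simp
    show "sum ?t ({..degree X} \<times> {..degree Y}) \<noteq> 0" using nz unfolding c .
    show "\<forall>p\<in>{..degree X} \<times> {..degree Y}. ?t p \<noteq> 0 \<longrightarrow> mX + mY + s * real k \<le> real_of_int (val (?t p))"
    proof (intro ballI impI)
      fix p assume tp: "?t p \<noteq> 0"
      obtain i j where p: "p = (i,j)" by (cases p)
      have k: "i + j = k" using tp p by (cases "i + j = k") auto
      have t: "coeff X i * (sigma_O ^^ i) (coeff Y j) \<noteq> 0" using tp p k by simp
      have tv: "?t p = coeff X i * (sigma_O ^^ i) (coeff Y j)" using p k by simp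
      note tf = term_facts[OF t]
      have a: "mX \<le> real_of_int (val (coeff X i)) - s * real i"
              "mY \<le> real_of_int (val (coeff Y j)) - s * real j" using hX hY tf unfolding psi_def by auto
      have rk: "real k = real i + real j" using k by (metis of_nat_add)
      have "mX + mY + s * real k \<le> real_of_int (val (coeff X i)) + real_of_int (val (coeff Y j))"
        using a unfolding rk by (simp add: distrib_left)
      thus "mX + mY + s * real k \<le> real_of_int (val (?t p))"
        unfolding tv tf(3) by simp
    qed
  qed
  thus ?thesis unfolding psi_def c by simp
qed

lemma prod_face:
  fixes X Y :: "'k::field qore"
  assumes hX: "\<forall>i. coeff X i \<noteq> 0 \<longrightarrow> mX \<le> psi s X i"
    and hY: "\<forall>j. coeff Y j \<noteq> 0 \<longrightarrow> mY \<le> psi s Y j"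
    and i1: "coeff X i1 \<noteq> 0" "psi s X i1 = mX"
    and j1: "coeff Y j1 \<noteq> 0" "psi s Y j1 = mY"
    and uniq: "\<forall>i j. coeff X i \<noteq> 0 \<longrightarrow> coeff Y j \<noteq> 0 \<longrightarrow> psi s X i = mX \<longrightarrow> psi s Y j = mY
                \<longrightarrow> i + j = i1 + j1 \<longrightarrow> i = i1"
  shows "coeff (skew_mult sigma_O X Y) (i1 + j1) \<noteq> 0 \<and> psi s (skew_mult sigma_O X Y) (i1 + j1) = mX + mY"
proof -
  define k where "k = i1 + j1"
  let ?t = "\<lambda>(i,j). if i + j = k then coeff X i * (sigma_O ^^ i) (coeff Y j) else 0"
  have t0: "coeff X i1 * (sigma_O ^^ i1) (coeff Y j1) \<noteq> 0"
    using i1 j1 sigma_O_pow_val[OF j1(1)] by simp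
  note tf0 = term_facts[OF t0]
  have mem: "(i1, j1) \<in> {..degree X} \<times> {..degree Y}" using i1 j1 le_degree by auto
  have U: "sum ?t ({..degree X} \<times> {..degree Y}) \<noteq> 0 \<and>
           val (sum ?t ({..degree X} \<times> {..degree Y})) = val (?t (i1, j1))"
  proof (rule val_sum_unique)
    show "finite ({..degree X} \<times> {..degree Y})" by simp
    show "(i1, j1) \<in> {..degree X} \<times> {..degree Y}" by (rule mem)
    show "?t (i1, j1) \<noteq> 0" using t0 unfolding k_def by simp
    show "\<forall>p\<in>{..degree X} \<times> {..degree Y} - {(i1, j1)}. ?t p \<noteq> 0 \<longrightarrow> val (?t (i1, j1)) < val (?t p)"
    proof (intro ballI impI)
      fix p assume pm: "p \<in> {..degree X} \<times> {..degree Y} - {(i1, j1)}" and tp: "?t p \<noteq> 0"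
      obtain i j where p: "p = (i,j)" by (cases p)
      have k: "i + j = k" using tp p by (cases "i + j = k") auto
      have t: "coeff X i * (sigma_O ^^ i) (coeff Y j) \<noteq> 0" using tp p k by simp
      have tv: "?t p = coeff X i * (sigma_O ^^ i) (coeff Y j)" using p k by simp
      note tf = term_facts[OF t]
      have ne: "(i, j) \<noteq> (i1, j1)" using pm p by auto
      have a: "mX \<le> psi s X i" "mY \<le> psi s Y j" using hX hY tf by auto
      have "\<not> (psi s X i = mX \<and> psi s Y j = mY)"
      proof
        assume "psi s X i = mX \<and> psi s Y j = mY"
        hence "i = i1" using uniq tf k k_def by blast
        thus False using ne k k_def by simp
      qed
      hence "mX + mY < psi s X i + psi s Y j" using a by linarith
      moreover have "real i + real j = real i1 + real j1" using k k_def by (metis of_nat_add)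
      hence "s * real i + s * real j = s * real i1 + s * real j1" by (metis distrib_left)
      ultimately have "real_of_int (val (coeff X i1) + val (coeff Y j1)) < real_of_int (val (coeff X i) + val (coeff Y j))"
        using i1 j1 unfolding psi_def by simp
      hence lt: "val (coeff X i1) + val (coeff Y j1) < val (coeff X i) + val (coeff Y j)" by linarith
      have tt0: "?t (i1, j1) = coeff X i1 * (sigma_O ^^ i1) (coeff Y j1)" using k_def by simp
      show "val (?t (i1, j1)) < val (?t p)" unfolding tv tt0 tf(3) tf0(3) by (rule lt)
    qed
  qed
  have c: "coeff (skew_mult sigma_O X Y) k = sum ?t ({..degree X} \<times> {..degree Y})"
    by (rule coeff_skew_prod)
  have tt: "?t (i1, j1) = coeff X i1 * (sigma_O ^^ i1) (coeff Y j1)" using k_def by simp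
  have nzk: "coeff (skew_mult sigma_O X Y) k \<noteq> 0" unfolding c using U by blast
  have "val (coeff (skew_mult sigma_O X Y) k) = val (?t (i1, j1))" unfolding c using U by blast
  also have "\<dots> = val (coeff X i1) + val (coeff Y j1)" unfolding tt by (rule tf0(3))
  finally have v: "val (coeff (skew_mult sigma_O X Y) k) = val (coeff X i1) + val (coeff Y j1)" .
  have rk: "real k = real i1 + real j1" unfolding k_def by simp
  have "psi s (skew_mult sigma_O X Y) k = psi s X i1 + psi s Y j1"
    unfolding psi_def v rk by (simp add: algebra_simps)
  hence "psi s (skew_mult sigma_O X Y) k = mX + mY" using i1 j1 by simp
  thus ?thesis using nzk by (simp add: k_def)
qed



definition upc :: "(real \<times> real) set \<Rightarrow> (real \<times> real) set" where
  "upc X = {(x, y + t) | x y t. (x, y) \<in> X \<and> t \<ge> 0}"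

lemma lower_hull_upc: "lower_hull X = frontier (upc X)"
  unfolding lower_hull_def upc_def ..

lemma upc_mem: "p \<in> X \<Longrightarrow> t \<ge> 0 \<Longrightarrow> (fst p, snd p + t) \<in> upc X"
  unfolding upc_def by (cases p) auto

lemma upc_sub: "X \<subseteq> upc X"
  using upc_mem[of _ X 0] by auto

lemma upc_elim: "y \<in> upc X \<Longrightarrow> \<exists>p\<in>X. \<exists>t\<ge>0. y = (fst p, snd p + t)"
  unfolding upc_def apply clarsimp
  subgoal for x y t by (rule bexI[of _ "(x,y)"]) auto
  done

lemma upc_up: "y \<in> upc X \<Longrightarrow> t \<ge> 0 \<Longrightarrow> (fst y, snd y + t) \<in> upc X"
proof -
  assume "y \<in> upc X" "t \<ge> 0"
  then obtain p t' where "p \<in> X" "t' \<ge> 0" "y = (fst p, snd p + t')" using upc_elim by blast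
  thus ?thesis using upc_mem[of p X "t' + t"] \<open>t \<ge> 0\<close> by (simp add: add.assoc)
qed

lemma upc_sums: "upc X = (\<Union>a\<in>{(0::real, t) | t. t \<ge> 0}. \<Union>b\<in>X. {a + b})"
proof (intro equalityI subsetI)
  fix y assume "y \<in> upc X"
  then obtain p t where "p \<in> X" "t \<ge> 0" "y = (fst p, snd p + t)" using upc_elim by blast
  moreover have "y = (0, t) + p" using \<open>y = (fst p, snd p + t)\<close> by (cases p) simp
  ultimately show "y \<in> (\<Union>a\<in>{(0::real, t) | t. t \<ge> 0}. \<Union>b\<in>X. {a + b})"
    by blast
next
  fix y assume "y \<in> (\<Union>a\<in>{(0::real, t) | t. t \<ge> 0}. \<Union>b\<in>X. {a + b})"
  then obtain t p where "t \<ge> 0" "p \<in> X" "y = (0, t) + p" by blast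
  thus "y \<in> upc X" using upc_mem[of p X t] by (cases p) (simp add: add.commute)
qed

lemma closed_ray: "closed {(0::real, t) | t. t \<ge> (0::real)}"
proof -
  have "{(0::real, t) | t. t \<ge> (0::real)} = {0} \<times> {0..}" by auto
  thus ?thesis by (simp add: closed_Times)
qed

lemma convex_ray: "convex {(0::real, t) | t. t \<ge> (0::real)}"
proof -
  have "{(0::real, t) | t. t \<ge> (0::real)} = {0} \<times> {0..}" by auto
  thus ?thesis by (simp add: convex_Times)
qed

lemma closed_upc: "compact X \<Longrightarrow> closed (upc X)"
  unfolding upc_sums by (rule closed_compact_sums[OF closed_ray])

lemma convex_upc: "convex X \<Longrightarrow> convex (upc X)"
  unfolding upc_sums by (rule convex_sums[OF convex_ray])

definition phi :: "real \<Rightarrow> real \<times> real \<Rightarrow> real" where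
  "phi s p = snd p - s * fst p"

lemma convex_phi_ge: "convex {y. m \<le> phi s y + c * fst y}"
proof -
  have "{y. m \<le> phi s y + c * fst y} = {y. inner (c - s, 1::real) y \<ge> m}"
    by (auto simp: phi_def inner_prod_def algebra_simps)
  thus ?thesis by (simp add: convex_halfspace_ge)
qed

lemma phi_ge_upc:
  assumes "\<forall>p\<in>Pts. m \<le> phi s p" "y \<in> upc (convex hull Pts)"
  shows "m \<le> phi s y"
proof -
  have c: "convex {y. m \<le> phi s y}" using convex_phi_ge[of m s 0] by simp
  have "convex hull Pts \<subseteq> {y. m \<le> phi s y}"
    by (rule hull_minimal) (use assms(1) c in auto)
  moreover obtain p t where "p \<in> convex hull Pts" "t \<ge> 0" "y = (fst p, snd p + t)"
    using upc_elim assms(2) by blast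
  ultimately show ?thesis by (auto simp: phi_def)
qed

lemma phi_segment:
  assumes "z \<in> closed_segment p1 p2" "phi s p1 = m" "phi s p2 = m"
  shows "phi s z = m"
proof -
  obtain u where "z = (1 - u) *\<^sub>R p1 + u *\<^sub>R p2" using assms(1) unfolding closed_segment_def by blast
  hence fz: "fst z = (1 - u) * fst p1 + u * fst p2" and sz: "snd z = (1 - u) * snd p1 + u * snd p2" by simp_all
  have "phi s z = (1 - u) * phi s p1 + u * phi s p2" unfolding phi_def fz sz by (simp add: algebra_simps)
  thus ?thesis using assms by (simp add: algebra_simps)
qed

lemma G2:
  assumes p: "p1 \<in> Pts" "p2 \<in> Pts" "fst p1 < fst p2"
    and m: "phi s p1 = m" "phi s p2 = m" "\<forall>p\<in>Pts. m \<le> phi s p"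
  shows "s \<in> {(snd v - snd u) / (fst v - fst u) | u v.
      fst u < fst v \<and> closed_segment u v \<subseteq> lower_hull (convex hull Pts)}"
proof -
  let ?R = "upc (convex hull Pts)"
  have seg: "closed_segment p1 p2 \<subseteq> lower_hull (convex hull Pts)"
  proof
    fix z assume z: "z \<in> closed_segment p1 p2"
    have "closed_segment p1 p2 \<subseteq> convex hull Pts"
      using closed_segment_subset_convex_hull hull_inc p(1,2) by metis
    hence zR: "z \<in> ?R" using z upc_sub by blast
    have pz: "phi s z = m" using phi_segment[OF z m(1,2)] .
    have "z \<notin> interior ?R"
    proof
      assume "z \<in> interior ?R"
      then obtain e where e: "e > 0" "ball z e \<subseteq> ?R" using mem_interior by blast
      have "z - (0, e/2) \<in> ball z e" using e by (simp add: dist_norm)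
      hence "z - (0, e/2) \<in> ?R" using e by blast
      hence "m \<le> phi s (z - (0, e/2))" using phi_ge_upc m(3) by blast
      thus False using pz e by (simp add: phi_def)
    qed
    thus "z \<in> lower_hull (convex hull Pts)"
      unfolding lower_hull_upc frontier_def using zR closure_subset by blast
  qed
  have "s = (snd p2 - snd p1) / (fst p2 - fst p1)"
    using m p(3) by (simp add: phi_def field_simps)
  thus ?thesis using seg p(3) by blast
qed

lemma finite_pos_lower:
  assumes "finite S" "\<forall>p\<in>S. 0 < (g p :: real)" shows "\<exists>k>0. \<forall>p\<in>S. k \<le> g p"
proof (cases "S = {}")
  case True thus ?thesis by (intro exI[of _ 1]) simp
next
  case False thus ?thesis using assms by (intro exI[of _ "Min (g ` S)"]) auto
qed

lemma G1:
  assumes fin: "finite Pts"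
    and seg: "closed_segment u v \<subseteq> lower_hull (convex hull Pts)"
    and uv: "fst u < fst v"
    and s_def: "s = (snd v - snd u) / (fst v - fst u)"
  shows "\<exists>p1\<in>Pts. \<exists>p2\<in>Pts. fst p1 < fst p2 \<and> phi s p1 = phi s p2 \<and> (\<forall>p\<in>Pts. phi s p1 \<le> phi s p)"
    (is "?E")
proof -
  define R where "R = upc (convex hull Pts)"
  have cR: "closed R" unfolding R_def by (rule closed_upc[OF finite_imp_compact_convex_hull[OF fin]])
  have cvR: "convex R" unfolding R_def by (rule convex_upc[OF convex_convex_hull])
  have front: "closed_segment u v \<subseteq> frontier R" using seg unfolding R_def lower_hull_upc .
  have clR: "closure R = R" using cR by (rule closure_closed)
  have uR: "u \<in> R" and vR: "v \<in> R"
    using front clR unfolding frontier_def by auto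
  have slope: "snd v - snd u = s * (fst v - fst u)" using uv s_def by simp
  define Op where "Op = {w. fst u < fst w} \<inter> {w. fst w < fst v} \<inter> {w. snd u + s * (fst w - fst u) < snd w}"
  have oO: "open Op" unfolding Op_def
    by (intro open_Int open_Collect_less continuous_intros)
  have OR: "Op \<subseteq> R"
  proof
    fix w assume w: "w \<in> Op"
    define l where "l = (fst w - fst u) / (fst v - fst u)"
    have l01: "0 \<le> l" "l \<le> 1" using w uv unfolding Op_def l_def by (auto simp: field_simps)
    define p where "p = (1 - l) *\<^sub>R u + l *\<^sub>R v"
    have "p \<in> closed_segment u v" unfolding p_def closed_segment_def using l01 by blast
    hence pR: "p \<in> R" using closed_segment_subset[OF uR vR cvR] by blast
    have lw: "l * (fst v - fst u) = fst w - fst u" unfolding l_def using uv by simp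
    have "fst p = fst u + l * (fst v - fst u)" unfolding p_def by (simp add: algebra_simps)
    hence fp: "fst p = fst w" using lw by simp
    have "snd p = snd u + l * (snd v - snd u)" unfolding p_def by (simp add: algebra_simps)
    moreover have "l * (s * (fst v - fst u)) = s * (fst w - fst u)" using lw by (metis mult.left_commute)
    ultimately have sp: "snd p = snd u + s * (fst w - fst u)" unfolding slope by simp
    have "snd w - snd p \<ge> 0" using w sp unfolding Op_def by simp
    from upc_up[OF pR[unfolded R_def] this] show "w \<in> R" unfolding R_def using fp by (cases w) simp
  qed
  have "((fst u + fst v) / 2, snd u + s * (fst v - fst u) / 2 + 1) \<in> Op"
    unfolding Op_def using uv by (simp add: field_simps)
  hence intne: "interior R \<noteq> {}" using interior_maximal[OF OR oO] by blast
  have ri: "rel_interior R = interior R" by (rule rel_interior_nonempty_interior[OF intne])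
  define x where "x = midpoint u v"
  have "x \<in> closed_segment u v" unfolding x_def by (rule midpoint_in_closed_segment)
  hence "x \<in> frontier R" by (rule subsetD[OF front])
  hence "x \<in> closure R - interior R" unfolding frontier_def .
  hence xc: "x \<in> closure R" and xi: "x \<notin> rel_interior R" unfolding ri by simp_all
  have "\<exists>a. a \<noteq> 0 \<and> (\<forall>y\<in>closure R. a \<bullet> x \<le> a \<bullet> y)"
  proof (rule supporting_hyperplane_relative_frontier[OF cvR xc xi])
    fix a assume "a \<noteq> 0" "\<And>y. y \<in> closure R \<Longrightarrow> a \<bullet> x \<le> a \<bullet> y"
    thus "\<exists>a. a \<noteq> 0 \<and> (\<forall>y\<in>closure R. a \<bullet> x \<le> a \<bullet> y)" by blast
  qed
  then obtain a where a0: "a \<noteq> 0" and sup0: "\<forall>y\<in>closure R. a \<bullet> x \<le> a \<bullet> y" by blast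
  have sup: "\<And>y. y \<in> closure R \<Longrightarrow> a \<bullet> x \<le> a \<bullet> y" using sup0 by blast
  obtain a1 a2 where a: "a = (a1, a2)" by (cases a)
  have ip: "\<And>y. a \<bullet> y = a1 * fst y + a2 * snd y" unfolding a by (simp add: inner_prod_def)
  have xR: "x \<in> R" using xc clR by simp
  have fx: "fst x = (fst u + fst v) / 2" and sx: "snd x = (snd u + snd v) / 2"
    unfolding x_def midpoint_def by simp_all
  have hu: "a \<bullet> x \<le> a \<bullet> u" and hv: "a \<bullet> x \<le> a \<bullet> v" using sup uR vR clR by auto
  have "a \<bullet> u + a \<bullet> v = 2 * (a \<bullet> x)" unfolding ip fx sx by (simp add: field_simps)
  hence eu: "a \<bullet> u = a \<bullet> x" and ev: "a \<bullet> v = a \<bullet> x" using hu hv by linarith+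
  have "(fst x, snd x + 1) \<in> R" using upc_up[of x "convex hull Pts" 1] xR unfolding R_def by simp
  hence "a \<bullet> x \<le> a \<bullet> (fst x, snd x + 1)" using sup clR by simp
  hence a2ge: "a2 \<ge> 0" unfolding ip by (simp add: algebra_simps)
  have "a1 * (fst v - fst u) + a2 * (snd v - snd u) = 0" using eu ev unfolding ip by (simp add: algebra_simps)
  hence "(a1 + a2 * s) * (fst v - fst u) = 0" unfolding slope by (simp add: algebra_simps)
  hence a1: "a1 = - a2 * s" using uv by simp
  have "a2 \<noteq> 0"
  proof
    assume "a2 = 0"
    hence "a = 0" using a1 a by (simp add: zero_prod_def)
    thus False using a0 by simp
  qed
  hence a2p: "a2 > 0" using a2ge by simp
  have ipphi: "\<And>y. a \<bullet> y = a2 * phi s y" unfolding ip a1 phi_def by (simp add: algebra_simps)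
  have phiR: "\<And>y. y \<in> R \<Longrightarrow> phi s x \<le> phi s y"
  proof -
    fix y assume "y \<in> R"
    hence "a \<bullet> x \<le> a \<bullet> y" using sup clR by simp
    hence "a2 * phi s x \<le> a2 * phi s y" unfolding ipphi .
    thus "phi s x \<le> phi s y" using a2p by simp
  qed
  have phu: "phi s u = phi s x" and phv: "phi s v = phi s x"
    using eu ev a2p unfolding ipphi by simp_all
  have "Pts \<noteq> {}"
  proof
    assume "Pts = {}"
    hence "R = {}" unfolding R_def upc_def by simp
    thus False using uR by simp
  qed
  define m0 where "m0 = Min (phi s ` Pts)"
  have m0le: "\<forall>p\<in>Pts. m0 \<le> phi s p" unfolding m0_def using fin by simp
  have "m0 \<in> phi s ` Pts" unfolding m0_def by (rule Min_in) (use fin \<open>Pts \<noteq> {}\<close> in auto)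
  then obtain p0 where p0: "p0 \<in> Pts" "phi s p0 = m0" by (metis imageE)
  have "p0 \<in> R" unfolding R_def using upc_sub hull_inc[OF p0(1)] by blast
  hence "phi s x \<le> m0" using phiR p0(2) by metis
  moreover have "m0 \<le> phi s x" using phi_ge_upc[OF m0le] xR unfolding R_def .
  ultimately have mx: "phi s x = m0" by simp
  show ?thesis
  proof (rule ccontr)
    assume nex: "\<not> ?thesis"
    define \<alpha> where "\<alpha> = fst p0"
    have face: "\<forall>q\<in>Pts. phi s q = m0 \<longrightarrow> fst q = \<alpha>"
    proof (intro ballI impI)
      fix q assume q: "q \<in> Pts" "phi s q = m0"
      show "fst q = \<alpha>"
      proof (rule ccontr)
        assume "fst q \<noteq> \<alpha>"
        hence "fst q < fst p0 \<or> fst p0 < fst q" unfolding \<alpha>_def by auto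
        moreover have "\<not> fst q < fst p0"
        proof
          assume "fst q < fst p0"
          hence ?E using q p0 m0le by (intro bexI[of _ q] bexI[of _ p0]) auto
          thus False using nex by blast
        qed
        moreover have "\<not> fst p0 < fst q"
        proof
          assume "fst p0 < fst q"
          hence ?E using q p0 m0le by (intro bexI[of _ p0] bexI[of _ q]) auto
          thus False using nex by blast
        qed
        ultimately show False by blast
      qed
    qed
    define g where "g p = (if phi s p = m0 then 1 else (phi s p - m0) / (\<bar>fst p - \<alpha>\<bar> + 1))" for p
    have "\<forall>p\<in>Pts. 0 < g p"
    proof
      fix p assume "p \<in> Pts"
      hence "m0 \<le> phi s p" using m0le by simp
      thus "0 < g p" unfolding g_def by (auto intro!: divide_pos_pos simp: abs_ge_zero add_nonneg_pos)
    qed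
    then obtain k where k0: "k > 0" and kg: "\<forall>p\<in>Pts. k \<le> g p" using finite_pos_lower[OF fin] by blast
    define C where "C = {y. m0 - k * \<alpha> \<le> phi s y + (-k) * fst y} \<inter> {y. m0 + k * \<alpha> \<le> phi s y + k * fst y}"
    have cC: "convex C" unfolding C_def by (intro convex_Int convex_phi_ge)
    have PC: "Pts \<subseteq> C"
    proof
      fix p assume p: "p \<in> Pts"
      have "k * \<bar>fst p - \<alpha>\<bar> \<le> phi s p - m0"
      proof (cases "phi s p = m0")
        case True thus ?thesis using face p by simp
      next
        case False
        have "k \<le> g p" using kg p by blast
        hence "k \<le> (phi s p - m0) / (\<bar>fst p - \<alpha>\<bar> + 1)" using False unfolding g_def by simp
        hence "k * (\<bar>fst p - \<alpha>\<bar> + 1) \<le> phi s p - m0"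
          by (simp add: pos_le_divide_eq add_nonneg_pos)
        thus ?thesis using k0 by (simp add: algebra_simps)
      qed
      moreover have "k * (fst p - \<alpha>) \<le> k * \<bar>fst p - \<alpha>\<bar>" "k * (\<alpha> - fst p) \<le> k * \<bar>fst p - \<alpha>\<bar>"
        using k0 by (intro mult_left_mono; simp)+
      ultimately show "p \<in> C" unfolding C_def by (simp add: algebra_simps)
    qed
    have HC: "convex hull Pts \<subseteq> C" by (rule hull_minimal[of Pts C convex, OF PC cC])
    have RC: "R \<subseteq> C"
    proof
      fix y assume "y \<in> R"
      then obtain p t where p: "p \<in> convex hull Pts" "t \<ge> 0" "y = (fst p, snd p + t)"
        using upc_elim unfolding R_def by blast
      thus "y \<in> C" using HC unfolding C_def by (auto simp: phi_def)
    qed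
    have "u \<in> C" using RC uR by blast
    hence "k * fst u \<le> k * \<alpha>" "k * \<alpha> \<le> k * fst u" using phu mx unfolding C_def by (simp_all add: algebra_simps)
    hence "k * fst u = k * \<alpha>" by linarith
    hence fu: "fst u = \<alpha>" using k0 by simp
    have "v \<in> C" using RC vR by blast
    hence "k * fst v \<le> k * \<alpha>" "k * \<alpha> \<le> k * fst v" using phv mx unfolding C_def by (simp_all add: algebra_simps)
    hence "k * fst v = k * \<alpha>" by linarith
    hence fv: "fst v = \<alpha>" using k0 by simp
    show False using fu fv uv by simp
  qed
qed



definition pts :: "'k::field qweyl \<Rightarrow> (real \<times> real) set" where
  "pts X = {(real a, real b) | a b. coeff (coeff X a) b \<noteq> 0}"

lemma newton_polygon_pts: "newton_polygon X = convex hull (pts X)"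
  unfolding newton_polygon_def pts_def ..

lemma finite_pts: "finite (pts X)"
proof -
  have "pts X \<subseteq> (\<Union>a\<in>{..degree X}. (\<lambda>b. (real a, real b)) ` {..degree (coeff X a)})"
  proof
    fix p assume "p \<in> pts X"
    then obtain a b where p: "p = (real a, real b)" "coeff (coeff X a) b \<noteq> 0" unfolding pts_def by blast
    hence "coeff X a \<noteq> 0" by auto
    hence "a \<le> degree X" by (rule le_degree)
    moreover have "b \<le> degree (coeff X a)" using p(2) by (rule le_degree)
    ultimately show "p \<in> (\<Union>a\<in>{..degree X}. (\<lambda>b. (real a, real b)) ` {..degree (coeff X a)})"
      using p by blast
  qed
  thus ?thesis by (rule finite_subset) auto
qed

lemma order_one: "order 0 (1 :: 'a::idom poly) = 0"
  by (rule order_0I) simp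

lemma coeff_W_to_O: "coeff (W_to_O A) i = Fract (coeff A i) 1"
  unfolding W_to_O_def by (simp add: coeff_map_poly Zero_fract_def[symmetric])

lemma W_to_O_nz: "coeff (W_to_O A) i \<noteq> 0 \<longleftrightarrow> coeff A i \<noteq> 0"
  unfolding coeff_W_to_O by (simp add: Fract_eq0)

lemma psi_W_to_O: "coeff A i \<noteq> 0 \<Longrightarrow> psi s (W_to_O A) i = real (order 0 (coeff A i)) - s * real i"
  unfolding psi_def coeff_W_to_O by (simp add: val_Fract order_one)

lemma pts_to_col:
  fixes X :: "'k::field qweyl"
  assumes p1: "p1 \<in> pts X" and min: "\<forall>p\<in>pts X. phi s p1 \<le> phi s p"
  obtains a where "coeff X a \<noteq> 0" "real a = fst p1"
    "real (order 0 (coeff X a)) - s * real a = phi s p1"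
proof -
  obtain a b where p: "p1 = (real a, real b)" "coeff (coeff X a) b \<noteq> 0" using p1 unfolding pts_def by blast
  have c: "coeff X a \<noteq> 0" using p by auto
  have o: "order 0 (coeff X a) \<le> b" using p(2) by (rule ord_le)
  have "(real a, real (order 0 (coeff X a))) \<in> pts X" unfolding pts_def using ord_coeff_nz[OF c] by blast
  hence "phi s p1 \<le> phi s (real a, real (order 0 (coeff X a)))" using min by blast
  hence "real (order 0 (coeff X a)) - s * real a = phi s p1" using o p unfolding phi_def by simp
  thus ?thesis using that c p by simp
qed

lemma col_lower:
  fixes X :: "'k::field qweyl"
  assumes "\<forall>p\<in>pts X. m \<le> phi s p" "coeff X a \<noteq> 0"
  shows "m \<le> real (order 0 (coeff X a)) - s * real a"
proof -
  have "(real a, real (order 0 (coeff X a))) \<in> pts X" unfolding pts_def using ord_coeff_nz[OF assms(2)] by blast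
  thus ?thesis using assms(1) unfolding phi_def by fastforce
qed

lemma pts_lower:
  fixes X :: "'k::field qweyl"
  assumes "\<forall>a. coeff X a \<noteq> 0 \<longrightarrow> m \<le> real (order 0 (coeff X a)) - s * real a" "p \<in> pts X"
  shows "m \<le> phi s p"
proof -
  obtain a b where p: "p = (real a, real b)" "coeff (coeff X a) b \<noteq> 0" using assms(2) unfolding pts_def by blast
  have c: "coeff X a \<noteq> 0" using p by auto
  have "order 0 (coeff X a) \<le> b" using p(2) by (rule ord_le)
  thus ?thesis using assms(1) c p unfolding phi_def by fastforce
qed

lemma face_exists:
  fixes X :: "'k::field qore"
  assumes "X \<noteq> 0"
  obtains m i1 i2 where "\<forall>i. coeff X i \<noteq> 0 \<longrightarrow> m \<le> psi s X i"
    "coeff X i1 \<noteq> 0" "psi s X i1 = m" "coeff X i2 \<noteq> 0" "psi s X i2 = m"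
    "\<forall>i. coeff X i \<noteq> 0 \<longrightarrow> psi s X i = m \<longrightarrow> i1 \<le> i \<and> i \<le> i2"
proof -
  define I where "I = {i. coeff X i \<noteq> 0}"
  have fI: "finite I" unfolding I_def
    by (rule finite_subset[of _ "{..degree X}"]) (auto intro: le_degree)
  have neI: "I \<noteq> {}" unfolding I_def using assms by (metis (mono_tags) empty_Collect_eq leading_coeff_0_iff)
  define m where "m = Min (psi s X ` I)"
  have mle: "\<forall>i. coeff X i \<noteq> 0 \<longrightarrow> m \<le> psi s X i" unfolding m_def I_def using fI I_def by simp
  have "m \<in> psi s X ` I" unfolding m_def using fI neI by simp
  define F where "F = {i\<in>I. psi s X i = m}"
  have fF: "finite F" unfolding F_def using fI by simp
  have neF: "F \<noteq> {}" unfolding F_def using \<open>m \<in> psi s X ` I\<close> by blast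
  have i1: "Min F \<in> F" and i2: "Max F \<in> F" using fF neF by simp_all
  show ?thesis
  proof (rule that[OF mle])
    show "coeff X (Min F) \<noteq> 0" "psi s X (Min F) = m" using i1 unfolding F_def I_def by auto
    show "coeff X (Max F) \<noteq> 0" "psi s X (Max F) = m" using i2 unfolding F_def I_def by auto
    show "\<forall>i. coeff X i \<noteq> 0 \<longrightarrow> psi s X i = m \<longrightarrow> Min F \<le> i \<and> i \<le> Max F"
      using fF unfolding F_def I_def by auto
  qed
qed

lemma skew_zero_left: "skew_mult \<sigma> 0 B = 0"
  unfolding skew_mult_def by simp



lemma subst_q_Fract:
  fixes \<omega> :: "'k::field"
  assumes "\<omega> \<noteq> 0" "b \<noteq> 0"
  shows "subst_q \<omega> (Fract a b) = Fract (pcompose a [:0, \<omega>:]) (pcompose b [:0, \<omega>:])"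
  unfolding subst_q_def
  by (rule fract_map_Fract) (auto simp: pcompose_mult pcomp_lin_nz assms)

lemma subst_q_zero_iff:
  fixes \<omega> :: "'k::field"
  assumes "\<omega> \<noteq> 0"
  shows "subst_q \<omega> x = 0 \<longleftrightarrow> x = 0"
proof -
  obtain a b where x: "x = Fract a b" "b \<noteq> 0" by (cases x)
  have nb: "pcompose b [:0, \<omega>:] \<noteq> 0" using pcomp_lin_nz[OF assms x(2)] .
  have "pcompose a [:0, \<omega>:] = 0 \<longleftrightarrow> a = 0"
    using pcomp_lin_nz[OF assms, of a] by auto
  thus ?thesis using x subst_q_Fract[OF assms x(2)] Fract_eq0[OF nb] Fract_eq0[OF x(2)] by simp
qed

lemma coeff_twist:
  fixes \<omega> :: "'k::field"
  assumes "\<omega> \<noteq> 0"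
  shows "coeff (coeff (twist \<omega> A) a) b = subst_q \<omega> (coeff (coeff A a) b)"
proof -
  have z: "subst_q \<omega> 0 = 0" using subst_q_zero_iff[OF assms] by simp
  show ?thesis unfolding twist_def
    by (simp add: coeff_map_poly z)
qed

lemma pts_twist:
  fixes \<omega> :: "'k::field"
  assumes "\<omega> \<noteq> 0"
  shows "pts (twist \<omega> A) = pts A"
  unfolding pts_def coeff_twist[OF assms] subst_q_zero_iff[OF assms] ..

lemma newton_slopes_pts:
  "newton_slopes X = {(snd v - snd u) / (fst v - fst u) | u v.
      fst u < fst v \<and> closed_segment u v \<subseteq> lower_hull (convex hull (pts X))}"
  unfolding newton_slopes_def newton_polygon_pts ..

lemma W_to_O_zero: "W_to_O A = 0 \<Longrightarrow> A = 0"
proof -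
  assume h: "W_to_O A = 0"
  have "\<forall>i. coeff A i = 0" using W_to_O_nz[of A] h by simp
  thus "A = 0" by (simp add: poly_eq_iff)
qed

lemma slopes_incl:
  fixes P A :: "'k::field qweyl" and Q :: "'k qore"
  assumes A0: "A \<noteq> 0" and AQ: "W_to_O A = skew_mult sigma_O Q (W_to_O P)"
    and s: "s \<in> newton_slopes P"
  shows "s \<in> newton_slopes A"
proof -
  obtain u v where s_def: "s = (snd v - snd u) / (fst v - fst u)" and uv: "fst u < fst v"
    and seg: "closed_segment u v \<subseteq> lower_hull (convex hull (pts P))"
    using s unfolding newton_slopes_pts by blast
  obtain p1 p2 where p: "p1 \<in> pts P" "p2 \<in> pts P" "fst p1 < fst p2" "phi s p1 = phi s p2"
    and pmin: "\<forall>p\<in>pts P. phi s p1 \<le> phi s p"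
    using G1[OF finite_pts seg uv s_def] by blast
  define mP where "mP = phi s p1"
  have pmin2: "\<forall>p\<in>pts P. phi s p2 \<le> phi s p" using pmin p(4) by simp
  obtain a1 where a1: "coeff P a1 \<noteq> 0" "real a1 = fst p1"
    "real (order 0 (coeff P a1)) - s * real a1 = phi s p1"
    using pts_to_col[OF p(1) pmin] by blast
  obtain a2 where a2: "coeff P a2 \<noteq> 0" "real a2 = fst p2"
    "real (order 0 (coeff P a2)) - s * real a2 = phi s p2"
    using pts_to_col[OF p(2) pmin2] by blast
  have a12: "a1 < a2" using a1(2) a2(2) p(3) by simp
  define PO where "PO = W_to_O P"
  have hP: "\<forall>i. coeff PO i \<noteq> 0 \<longrightarrow> mP \<le> psi s PO i"
  proof (intro allI impI)
    fix i assume "coeff PO i \<noteq> 0"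
    hence c: "coeff P i \<noteq> 0" unfolding PO_def W_to_O_nz .
    show "mP \<le> psi s PO i" unfolding PO_def psi_W_to_O[OF c] mP_def
      by (rule col_lower[OF pmin c])
  qed
  have pa1: "coeff PO a1 \<noteq> 0" "psi s PO a1 = mP"
    unfolding PO_def W_to_O_nz psi_W_to_O[OF a1(1)] mP_def using a1 by simp_all
  have pa2: "coeff PO a2 \<noteq> 0" "psi s PO a2 = mP"
    unfolding PO_def W_to_O_nz psi_W_to_O[OF a2(1)] mP_def using a2 p(4) by simp_all
  have PO0: "PO \<noteq> 0" using pa1 by auto
  obtain mP' ip1 ip2 where fP: "\<forall>i. coeff PO i \<noteq> 0 \<longrightarrow> mP' \<le> psi s PO i"
    "coeff PO ip1 \<noteq> 0" "psi s PO ip1 = mP'" "coeff PO ip2 \<noteq> 0" "psi s PO ip2 = mP'"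
    "\<forall>i. coeff PO i \<noteq> 0 \<longrightarrow> psi s PO i = mP' \<longrightarrow> ip1 \<le> i \<and> i \<le> ip2"
    using face_exists[OF PO0, of s] by blast
  have "mP' \<le> mP" using fP(1) pa1 by metis
  moreover have "mP \<le> mP'" using hP fP(2,3) by metis
  ultimately have mPe: "mP' = mP" by simp
  have ip12: "ip1 < ip2"
  proof -
    have "ip1 \<le> a1" using fP(6) pa1 mPe by simp
    moreover have "a2 \<le> ip2" using fP(6) pa2 mPe by simp
    ultimately show ?thesis using a12 by simp
  qed
  have Q0: "Q \<noteq> 0"
  proof
    assume "Q = 0"
    hence "W_to_O A = 0" using AQ skew_zero_left by metis
    thus False using A0 W_to_O_zero by blast
  qed
  obtain mQ iq1 iq2 where fQ: "\<forall>i. coeff Q i \<noteq> 0 \<longrightarrow> mQ \<le> psi s Q i"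
    "coeff Q iq1 \<noteq> 0" "psi s Q iq1 = mQ" "coeff Q iq2 \<noteq> 0" "psi s Q iq2 = mQ"
    "\<forall>i. coeff Q i \<noteq> 0 \<longrightarrow> psi s Q i = mQ \<longrightarrow> iq1 \<le> i \<and> i \<le> iq2"
    using face_exists[OF Q0, of s] by blast
  define Z where "Z = W_to_O A"
  have ZQ: "Z = skew_mult sigma_O Q PO" unfolding Z_def PO_def by (rule AQ)
  have hP': "\<forall>i. coeff PO i \<noteq> 0 \<longrightarrow> mP' \<le> psi s PO i" using fP(1) .
  have k1: "coeff Z (iq1 + ip1) \<noteq> 0 \<and> psi s Z (iq1 + ip1) = mQ + mP'"
    unfolding ZQ
  proof (rule prod_face[OF fQ(1) hP' fQ(2,3) fP(2,3)])
    show "\<forall>i j. coeff Q i \<noteq> 0 \<longrightarrow> coeff PO j \<noteq> 0 \<longrightarrow> psi s Q i = mQ \<longrightarrow> psi s PO j = mP'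
                \<longrightarrow> i + j = iq1 + ip1 \<longrightarrow> i = iq1"
    proof (intro allI impI)
      fix i j assume h: "coeff Q i \<noteq> 0" "coeff PO j \<noteq> 0" "psi s Q i = mQ" "psi s PO j = mP'"
        "i + j = iq1 + ip1"
      have "iq1 \<le> i" using fQ(6) h by simp
      moreover have "ip1 \<le> j" using fP(6) h by simp
      ultimately show "i = iq1" using h(5) by simp
    qed
  qed
  have k2: "coeff Z (iq2 + ip2) \<noteq> 0 \<and> psi s Z (iq2 + ip2) = mQ + mP'"
    unfolding ZQ
  proof (rule prod_face[OF fQ(1) hP' fQ(4,5) fP(4,5)])
    show "\<forall>i j. coeff Q i \<noteq> 0 \<longrightarrow> coeff PO j \<noteq> 0 \<longrightarrow> psi s Q i = mQ \<longrightarrow> psi s PO j = mP'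
                \<longrightarrow> i + j = iq2 + ip2 \<longrightarrow> i = iq2"
    proof (intro allI impI)
      fix i j assume h: "coeff Q i \<noteq> 0" "coeff PO j \<noteq> 0" "psi s Q i = mQ" "psi s PO j = mP'"
        "i + j = iq2 + ip2"
      have "i \<le> iq2" using fQ(6) h by simp
      moreover have "j \<le> ip2" using fP(6) h by simp
      ultimately show "i = iq2" using h(5) by simp
    qed
  qed
  have low: "\<forall>k. coeff Z k \<noteq> 0 \<longrightarrow> mQ + mP' \<le> psi s Z k"
    unfolding ZQ using prod_lower[OF fQ(1) hP'] by blast
  have kk: "iq1 + ip1 < iq2 + ip2" using ip12 fQ(6) fQ(4,5) fQ(2,3) by (metis add_le_less_mono)
  define m where "m = mQ + mP'"
  define k1' where "k1' = iq1 + ip1"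
  define k2' where "k2' = iq2 + ip2"
  have cA1: "coeff A k1' \<noteq> 0" using k1 unfolding Z_def W_to_O_nz k1'_def by simp
  have cA2: "coeff A k2' \<noteq> 0" using k2 unfolding Z_def W_to_O_nz k2'_def by simp
  have "psi s Z k1' = m" using k1 unfolding k1'_def m_def by simp
  hence v1: "real (order 0 (coeff A k1')) - s * real k1' = m"
    unfolding Z_def psi_W_to_O[OF cA1] .
  have "psi s Z k2' = m" using k2 unfolding k2'_def m_def by simp
  hence v2: "real (order 0 (coeff A k2')) - s * real k2' = m"
    unfolding Z_def psi_W_to_O[OF cA2] .
  have lowA: "\<forall>a. coeff A a \<noteq> 0 \<longrightarrow> m \<le> real (order 0 (coeff A a)) - s * real a"
  proof (intro allI impI)
    fix a assume c: "coeff A a \<noteq> 0"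
    hence "coeff Z a \<noteq> 0" unfolding Z_def W_to_O_nz .
    hence "m \<le> psi s Z a" using low m_def by simp
    thus "m \<le> real (order 0 (coeff A a)) - s * real a" unfolding Z_def psi_W_to_O[OF c] .
  qed
  define q1 where "q1 = (real k1', real (order 0 (coeff A k1')))"
  define q2 where "q2 = (real k2', real (order 0 (coeff A k2')))"
  have q1: "q1 \<in> pts A" unfolding q1_def pts_def using ord_coeff_nz[OF cA1] by blast
  have q2: "q2 \<in> pts A" unfolding q2_def pts_def using ord_coeff_nz[OF cA2] by blast
  have "s \<in> {(snd v - snd u) / (fst v - fst u) | u v.
      fst u < fst v \<and> closed_segment u v \<subseteq> lower_hull (convex hull (pts A))}"
  proof (rule G2[OF q1 q2])
    show "fst q1 < fst q2" unfolding q1_def q2_def k1'_def k2'_def using kk by simp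
    show "phi s q1 = m" unfolding q1_def phi_def using v1 by simp
    show "phi s q2 = m" unfolding q2_def phi_def using v2 by simp
    show "\<forall>p\<in>pts A. m \<le> phi s p" using pts_lower[OF lowA] by blast
  qed
  thus ?thesis unfolding newton_slopes_pts .
qed

theorem proposition2:
  fixes P A :: "'k::field_char_0 qweyl" and \<omega> :: 'k and m :: nat
  assumes roots_of_unity: "\<forall>n>0. \<exists>\<zeta>::'k. \<zeta> ^ n = 1 \<and> (\<forall>k. 0 < k \<and> k < n \<longrightarrow> \<zeta> ^ k \<noteq> 1)"
    and P_nz: "P \<noteq> 0"
    and m_pos: "m > 0"
    and omega: "\<omega> ^ m = 1"
    and A: "tau_pre m P A"
  shows "(\<forall>j. in_Mm_poly m (coeff (twist \<omega> A) j))
         \<and> newton_slopes P \<subseteq> newton_slopes (twist \<omega> A)"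
proof -
  have w0: "\<omega> \<noteq> 0" using omega m_pos by (metis power_0_left less_numeral_extra(3) zero_neq_one)
  have A0: "A \<noteq> 0" and Am: "\<forall>j. in_Mm_poly m (coeff A j)" and AI: "W_to_O A \<in> left_ideal_O P"
    using A unfolding tau_pre_def by auto
  obtain Q where AQ: "W_to_O A = skew_mult sigma_O Q (W_to_O P)" using AI unfolding left_ideal_O_def by blast
  have part1: "\<forall>j. in_Mm_poly m (coeff (twist \<omega> A) j)"
  proof
    fix j
    show "in_Mm_poly m (coeff (twist \<omega> A) j)"
      unfolding in_Mm_poly_def
    proof (intro allI impI)
      fix i assume "coeff (coeff (twist \<omega> A) j) i \<noteq> 0"
      hence "coeff (coeff A j) i \<noteq> 0" unfolding coeff_twist[OF w0] subst_q_zero_iff[OF w0] .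
      thus "m dvd i" using Am unfolding in_Mm_poly_def by blast
    qed
  qed
  have "newton_slopes (twist \<omega> A) = newton_slopes A"
    unfolding newton_slopes_pts pts_twist[OF w0] ..
  moreover have "newton_slopes P \<subseteq> newton_slopes A"
    using slopes_incl[OF A0 AQ] by blast
  ultimately show ?thesis using part1 by simp
qed

end
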